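(* Let $n\in\mathbb{N}$ and $S_{n,-1}(x)=\sum_{k=0}^n\Big(\binom{n}{k}x^k(1-x)^{n-k}\Big)^2$ for $x\in[0,1]$. Then $$S_{n,-1}^{(2j)}\!\left(\tfrac12\right)>0,\qquad j=0,1,\dots,n.$$
   Context: $S_{n,-1}^{(m)}$ denotes the $m$-th derivative of the polynomial $S_{n,-1}$. *)

theory Defs
  imports "HOL-Computational_Algebra.Polynomial"
begin

definition S_neg1 :: "nat \<Rightarrow> real poly" where
  "S_neg1 n = (\<Sum>k = 0..n. (smult (real (n choose k)) ([:0, 1:] ^ k * [:1, -1:] ^ (n - k))) ^ 2)"

end

theory Submission
  imports Defs
begin

lemma higher_pderiv_pcompose_lin:
  "(pderiv ^^ m) (p \<circ>\<^sub>p [:c, 1:]) = ((pderiv ^^ m) p) \<circ>\<^sub>p [:c, (1::real):]"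
  by (induction m) (simp_all add: pderiv_pcompose pderiv_pCons)

lemma taylor_coeff:
  fixes p :: "real poly"
  shows "poly ((pderiv ^^ m) p) c = fact m * coeff (p \<circ>\<^sub>p [:c, 1:]) m"
proof -
  have "poly ((pderiv ^^ m) p) c = poly (((pderiv ^^ m) p) \<circ>\<^sub>p [:c, 1:]) 0"
    by (simp add: poly_pcompose)
  also have "\<dots> = poly ((pderiv ^^ m) (p \<circ>\<^sub>p [:c, 1:])) 0"
    by (simp add: higher_pderiv_pcompose_lin)
  also have "\<dots> = coeff ((pderiv ^^ m) (p \<circ>\<^sub>p [:c, 1:])) 0"
    by (simp add: poly_0_coeff_0)
  also have "\<dots> = fact m * coeff (p \<circ>\<^sub>p [:c, 1:]) m"
    by (simp add: coeff_higher_pderiv pochhammer_fact)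
  finally show ?thesis .
qed

lemma sq_sum_coeff:
  fixes a b :: real
  shows "(\<Sum>k = 0..n. (real (n choose k) * a ^ k * b ^ (n - k))^2)
     = coeff ([:b, a:] ^ n * [:a, b:] ^ n) n"
proof -
  have "coeff ([:b, a:] ^ n * [:a, b:] ^ n) n
      = (\<Sum>i\<le>n. coeff ([:b, a:] ^ n) i * coeff ([:a, b:] ^ n) (n - i))"
    by (rule coeff_mult)
  also have "\<dots> = (\<Sum>i\<le>n. (real (n choose i) * a ^ i * b ^ (n - i))^2)"
  proof (rule sum.cong)
    fix i assume "i \<in> {..n}"
    then have i: "i \<le> n" by simp
    show "coeff ([:b, a:] ^ n) i * coeff ([:a, b:] ^ n) (n - i)
        = (real (n choose i) * a ^ i * b ^ (n - i))^2"
      using i by (simp add: coeff_linear_poly_power binomial_symmetric[OF i, symmetric]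
          power2_eq_square mult_ac)
  qed simp
  finally show ?thesis by (simp add: atLeast0AtMost)
qed


lemma reflect_G:
  fixes i m :: nat
  defines "G \<equiv> [:1, -1:] ^ i * [:1, 1:] ^ m :: real poly"
  shows "reflect_poly G = (-1) ^ i * G" and "degree G = i + m" and "coeff G 0 = 1"
proof -
  have r1: "reflect_poly [:1, -1::real:] = - [:1, -1:]"
    by (simp add: reflect_poly_pCons)
  have r2: "reflect_poly [:1, 1::real:] = [:1, 1:]"
    by (simp add: reflect_poly_pCons)
  show "reflect_poly G = (-1) ^ i * G"
    unfolding G_def by (simp only: reflect_poly_mult reflect_poly_power r1 r2 power_minus[of "[:1, -1::real:]"] mult.assoc)
  show "degree G = i + m"
    unfolding G_def by (simp add: degree_mult_eq degree_power_eq)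
  show "coeff G 0 = 1"
    unfolding G_def by (simp add: coeff_mult_0 coeff_0_power)
qed

lemma e_pos:
  fixes i n :: nat
  assumes "i \<le> n"
  shows "coeff ([:-1, 2, -1:] ^ i * [:1/4, 1/2, 1/4:] ^ (n - i) :: real poly) n > 0"
proof -
  define G :: "real poly" where "G = [:1, -1:] ^ i * [:1, 1:] ^ (n - i)"
  have rG: "reflect_poly G = (-1) ^ i * G" and dG: "degree G = n" and c0: "coeff G 0 = 1"
    using reflect_G[of i "n - i"] assms unfolding G_def by auto
  have m1: "(-1::real poly) ^ i = [:(-1) ^ i:]"
    by (induction i) simp_all
  have R: "[:-1, 2, -1:] = - ([:1, -1:] ^ 2 :: real poly)"
    by (simp add: power2_eq_square)
  have P: "[:1/4, 1/2, 1/4:] = smult (1/4) ([:1, 1:] ^ 2 :: real poly)"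
    by (simp add: power2_eq_square)
  have e1: "(- ([:1, -1:] ^ 2 :: real poly)) ^ i = (-1) ^ i * ([:1, -1:] ^ i * [:1, -1:] ^ i)"
    unfolding power_minus[of "[:1, -1::real:] ^ 2"] by (simp only: power2_eq_square power_mult_distrib)
  have e2: "(smult (1/4) ([:1, 1:] ^ 2 :: real poly)) ^ (n - i)
      = smult ((1/4) ^ (n - i)) ([:1, 1:] ^ (n - i) * [:1, 1:] ^ (n - i))"
    by (simp only: smult_power power2_eq_square power_mult_distrib)
  have eq: "[:-1, 2, -1:] ^ i * [:1/4, 1/2, 1/4:] ^ (n - i)
      = smult ((1/4) ^ (n - i)) ((-1) ^ i * (G * G))"
    unfolding R P G_def e1 e2 by (simp add: mult_ac)
  have refl: "coeff G (n - m) = (-1) ^ i * coeff G m" if "m \<le> n" for m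
  proof -
    have "coeff (reflect_poly G) m = coeff G (n - m)"
      using that dG by (simp add: coeff_reflect_poly)
    moreover have "coeff (reflect_poly G) m = (-1) ^ i * coeff G m"
      by (simp add: rG m1)
    ultimately show ?thesis by simp
  qed
  have "coeff (G * G) n = (\<Sum>m\<le>n. coeff G m * coeff G (n - m))"
    by (rule coeff_mult)
  also have "\<dots> = (-1) ^ i * (\<Sum>m\<le>n. (coeff G m)^2)"
    by (simp add: refl sum_distrib_left power2_eq_square mult_ac)
  finally have cGG: "coeff (G * G) n = (-1) ^ i * (\<Sum>m\<le>n. (coeff G m)^2)" .
  have pos: "(\<Sum>m\<le>n. (coeff G m)^2) > 0"
  proof -
    have "(\<Sum>m\<le>n. (coeff G m)^2) \<ge> (\<Sum>m\<in>{0}. (coeff G m)^2)"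
      by (rule sum_mono2) auto
    then show ?thesis using c0 by simp
  qed
  have "coeff ([:-1, 2, -1:] ^ i * [:1/4, 1/2, 1/4:] ^ (n - i)) n
      = (1/4) ^ (n - i) * ((-1) ^ i * coeff (G * G) n)"
    unfolding eq by (simp add: m1)
  also have "\<dots> = (1/4) ^ (n - i) * (\<Sum>m\<le>n. (coeff G m)^2)"
    by (simp add: cGG flip: power_mult_distrib)
  finally show ?thesis using pos by simp
qed


lemma pointwise:
  fixes t :: real and n :: nat
  defines "R \<equiv> [:-1, 2, -1:] :: real poly"
  defines "P \<equiv> [:1/4, 1/2, 1/4:] :: real poly"
  shows "poly (S_neg1 n \<circ>\<^sub>p [:1/2, 1:]) t
     = (\<Sum>i\<le>n. real (n choose i) * coeff (R ^ i * P ^ (n - i)) n * t ^ (2 * i))"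
proof -
  define a where "a = 1/2 + t"
  define b where "b = 1/2 - t"
  have "poly (S_neg1 n \<circ>\<^sub>p [:1/2, 1:]) t
      = (\<Sum>k = 0..n. (real (n choose k) * a ^ k * b ^ (n - k))^2)"
    by (simp add: S_neg1_def poly_pcompose poly_sum a_def b_def mult.assoc)
  also have "\<dots> = coeff ([:b, a:] ^ n * [:a, b:] ^ n) n"
    by (rule sq_sum_coeff)
  also have "[:b, a:] ^ n * [:a, b:] ^ n = (smult (t^2) R + P) ^ n"
  proof -
    have "[:b, a:] * [:a, b:] = smult (t^2) R + P"
      by (simp add: a_def b_def R_def P_def algebra_simps power2_eq_square)
    then show ?thesis by (simp flip: power_mult_distrib)
  qed
  also have "(smult (t^2) R + P) ^ n
      = (\<Sum>i\<le>n. of_nat (n choose i) * (smult (t^2) R) ^ i * P ^ (n - i))"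
    by (rule binomial_ring)
  also have "coeff \<dots> n = (\<Sum>i\<le>n. real (n choose i) * coeff (R ^ i * P ^ (n - i)) n * t ^ (2 * i))"
    by (simp add: coeff_sum of_nat_poly smult_power mult_ac flip: power_mult)
  finally show ?thesis .
qed


theorem mainTheorem5:
  fixes n j :: nat
  assumes "j \<le> n"
  shows "poly ((pderiv ^^ (2 * j)) (S_neg1 n)) (1 / 2) > 0"
proof -
  define e where "e i = coeff ([:-1, 2, -1:] ^ i * [:1/4, 1/2, 1/4:] ^ (n - i) :: real poly) n" for i
  define U where "U = (\<Sum>i\<le>n. smult (real (n choose i) * e i) (monom 1 (2 * i)))"
  have "poly (S_neg1 n \<circ>\<^sub>p [:1/2, 1:]) = poly U"
  proof
    fix t :: real
    show "poly (S_neg1 n \<circ>\<^sub>p [:1/2, 1:]) t = poly U t"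
      unfolding pointwise U_def e_def by (simp add: poly_sum poly_monom)
  qed
  then have TU: "S_neg1 n \<circ>\<^sub>p [:1/2, 1:] = U"
    by (simp add: poly_eq_poly_eq_iff)
  have "coeff U (2 * j) = (\<Sum>i\<le>n. real (n choose i) * e i * (if i = j then 1 else 0))"
    unfolding U_def by (simp add: coeff_sum coeff_monom)
  also have "\<dots> = (\<Sum>i\<le>n. if i = j then real (n choose i) * e i else 0)"
    by (rule sum.cong) auto
  also have "\<dots> = real (n choose j) * e j"
    using assms by (simp add: sum.delta)
  finally have cU: "coeff U (2 * j) = real (n choose j) * e j" .
  have "e j > 0" unfolding e_def using assms by (rule e_pos)
  moreover have "real (n choose j) > 0" using assms by simp
  ultimately show ?thesis
    by (simp add: taylor_coeff TU cU)
qed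

end
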